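(* Let $H=(\mathcal{V},\mathcal{E})$ be a hypergraph, $t:\mathcal{E}\to\mathcal{V}$ a representative function with image $R$, and let $C$ be a proper vertex colouring of the co-occurrence graph $G_{R,t}$ with positive colours. Then $C$ (with all vertices of $\mathcal{V}\setminus R$ receiving colour $0$) is a conflict-free colouring of $H$. Moreover, $\chi_{cf}(H)\leq\chi_{min}$.
   Context: Hyperedges of $H$ are nonempty subsets of the finite set $\mathcal{V}$. A conflict-free colouring of $H$ is a function $C:\mathcal{V}\to\{0,1,2,\dots\}$ such that every hyperedge $E$ contains a colour $j\geq1$ with $|E\cap C^{-1}(j)|=1$; $\chi_{cf}(H)$ is the minimum number of non-zero colours in such a colouring. A representative function is a map $t:\mathcal{E}\to\mathcal{V}$ with $t(E)\in E$; $R=t(\mathcal{E})$. The co-occurrence graph $G_{R,t}$ has vertex set $R$, with distinct $u,v$ adjacent iff some $E\in\mathcal{E}$ has $u,v\in E$ and $t(E)\in\{u,v\}$. $\chi_{min}$ is the minimum of the chromatic number $\chi(G_{R,t})$ over all representative functions $t$. *)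

theory Defs
  imports Main
begin

definition hypergraph :: "'a set \<Rightarrow> 'a set set \<Rightarrow> bool" where
  "hypergraph V E \<longleftrightarrow> finite V \<and> (\<forall>e\<in>E. e \<noteq> {} \<and> e \<subseteq> V)"

text \<open>Conflict-free colouring (colour 0 means uncoloured).\<close>
definition conflict_free :: "'a set set \<Rightarrow> ('a \<Rightarrow> nat) \<Rightarrow> bool" where
  "conflict_free E C \<longleftrightarrow> (\<forall>e\<in>E. \<exists>j\<ge>1. card (e \<inter> {v. C v = j}) = 1)"

definition chi_cf :: "'a set \<Rightarrow> 'a set set \<Rightarrow> nat" where
  "chi_cf V E = (LEAST k. \<exists>C. conflict_free E C \<and> card (C ` V - {0}) = k)"

definition representative :: "'a set set \<Rightarrow> ('a set \<Rightarrow> 'a) \<Rightarrow> bool" where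
  "representative E t \<longleftrightarrow> (\<forall>e\<in>E. t e \<in> e)"

definition cooc_adj :: "'a set set \<Rightarrow> ('a set \<Rightarrow> 'a) \<Rightarrow> 'a \<Rightarrow> 'a \<Rightarrow> bool" where
  "cooc_adj E t u v \<longleftrightarrow> u \<in> t ` E \<and> v \<in> t ` E \<and> u \<noteq> v \<and>
     (\<exists>e\<in>E. u \<in> e \<and> v \<in> e \<and> (t e = u \<or> t e = v))"

definition proper_pos_colouring :: "'a set \<Rightarrow> ('a \<Rightarrow> 'a \<Rightarrow> bool) \<Rightarrow> ('a \<Rightarrow> nat) \<Rightarrow> bool" where
  "proper_pos_colouring W adj C \<longleftrightarrow>
     (\<forall>v\<in>W. C v \<ge> 1) \<and> (\<forall>u\<in>W. \<forall>v\<in>W. adj u v \<longrightarrow> C u \<noteq> C v)"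

definition chromatic_number :: "'a set \<Rightarrow> ('a \<Rightarrow> 'a \<Rightarrow> bool) \<Rightarrow> nat" where
  "chromatic_number W adj = (LEAST k. \<exists>C. proper_pos_colouring W adj C \<and> C ` W \<subseteq> {1..k})"

definition chi_min :: "'a set set \<Rightarrow> nat" where
  "chi_min E = (LEAST k. \<exists>t. representative E t \<and> chromatic_number (t ` E) (cooc_adj E t) = k)"

end

theory Submission
  imports Defs
begin

lemma part1:
  assumes "representative E t"
    and "proper_pos_colouring (t ` E) (cooc_adj E t) C"
  shows "conflict_free E (\<lambda>v. if v \<in> t ` E then C v else 0)"
  unfolding conflict_free_def
proof
  fix e assume e: "e \<in> E"
  let ?C = "\<lambda>v. if v \<in> t ` E then C v else 0"
  have te: "t e \<in> e" using assms(1) e unfolding representative_def by blast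
  have tE: "t e \<in> t ` E" using e by blast
  have pos: "C (t e) \<ge> 1" using assms(2) tE unfolding proper_pos_colouring_def by blast
  have "e \<inter> {v. ?C v = C (t e)} = {t e}"
  proof (rule set_eqI, rule iffI)
    fix u assume u: "u \<in> e \<inter> {v. ?C v = C (t e)}"
    show "u \<in> {t e}"
    proof (rule ccontr)
      assume ne: "u \<notin> {t e}"
      have uE: "u \<in> t ` E" using u pos by (auto split: if_splits)
      have "cooc_adj E t u (t e)" unfolding cooc_adj_def using uE tE ne u te e by blast
      hence "C u \<noteq> C (t e)" using assms(2) uE tE unfolding proper_pos_colouring_def by blast
      thus False using u uE by auto
    qed
  next
    fix u assume "u \<in> {t e}" thus "u \<in> e \<inter> {v. ?C v = C (t e)}" using te tE by auto
  qed
  thus "\<exists>j\<ge>1. card (e \<inter> {v. ?C v = j}) = 1" using pos by (intro exI[of _ "C (t e)"]) auto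
qed

theorem lemma1:
  fixes V :: "'a set" and E :: "'a set set" and t :: "'a set \<Rightarrow> 'a" and C :: "'a \<Rightarrow> nat"
  assumes "hypergraph V E"
    and "representative E t"
    and "proper_pos_colouring (t ` E) (cooc_adj E t) C"
  shows "conflict_free E (\<lambda>v. if v \<in> t ` E then C v else 0) \<and> chi_cf V E \<le> chi_min E"
proof
  show "conflict_free E (\<lambda>v. if v \<in> t ` E then C v else 0)" using part1 assms(2,3) .
  have finE: "finite E" using assms(1) unfolding hypergraph_def
    by (meson Pow_iff finite_Pow_iff finite_subset subsetI)
  have "\<exists>t. representative E t \<and> chromatic_number (t ` E) (cooc_adj E t) = chi_min E"
    unfolding chi_min_def by (rule LeastI[of _ "chromatic_number (t ` E) (cooc_adj E t)"]) (use assms(2) in blast)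
  then obtain t0 where t0: "representative E t0"
    and k0: "chromatic_number (t0 ` E) (cooc_adj E t0) = chi_min E" by blast
  let ?W = "t0 ` E"
  have finW: "finite ?W" using finE by blast
  obtain h where h: "bij_betw h ?W {0..<card ?W}" using ex_bij_betw_finite_nat[OF finW] by blast
  have ex: "\<exists>C. proper_pos_colouring ?W (cooc_adj E t0) C \<and> C ` ?W \<subseteq> {1..card ?W}"
  proof (intro exI conjI)
    show "proper_pos_colouring ?W (cooc_adj E t0) (\<lambda>v. h v + 1)"
      unfolding proper_pos_colouring_def cooc_adj_def using h
      by (auto simp: bij_betw_def inj_on_def)
    show "(\<lambda>v. h v + 1) ` ?W \<subseteq> {1..card ?W}" using h by (force simp: bij_betw_def Suc_le_eq)
  qed
  have "\<exists>C. proper_pos_colouring ?W (cooc_adj E t0) C \<and> C ` ?W \<subseteq> {1..chi_min E}"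
    using LeastI[of "\<lambda>k. \<exists>C. proper_pos_colouring ?W (cooc_adj E t0) C \<and> C ` ?W \<subseteq> {1..k}", OF ex] k0
    unfolding chromatic_number_def by simp
  then obtain C0 where C0: "proper_pos_colouring ?W (cooc_adj E t0) C0"
    and C0i: "C0 ` ?W \<subseteq> {1..chi_min E}" by blast
  let ?C = "\<lambda>v. if v \<in> ?W then C0 v else 0"
  have cf: "conflict_free E ?C" using part1 t0 C0 .
  have sub: "?C ` V - {0} \<subseteq> {1..chi_min E}" using C0i by auto
  have "card (?C ` V - {0}) \<le> chi_min E"
    using card_mono[OF _ sub] by simp
  moreover have "chi_cf V E \<le> card (?C ` V - {0})"
    unfolding chi_cf_def by (rule Least_le) (use cf in blast)
  ultimately show "chi_cf V E \<le> chi_min E" by linarith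
qed

end
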